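(* Within the class $\mathbf{DLat}$ of bounded distributive lattices: (i) for regular cardinals $\lambda\le\kappa$, $\kappa\mathbf{proH}\subseteq\lambda\mathbf{proH}$, and the inclusion is proper when $\lambda<\kappa$; (ii) $\mathbf{proH}=\bigcap_\kappa\kappa\mathbf{proH}$ (over all regular cardinals $\kappa$); (iii) for every regular cardinal $\kappa$, $\kappa\mathbf{proH}\subsetneq\kappa\mathbf{JD}$; in particular $\omega_0\mathbf{proH}\subsetneq\omega_0\mathbf{JD}=\mathbf{DLat}$.
   Context: For a meet-semilattice $A$: $\mathcal{DM} A$ is the complete lattice of normal ideals ($N=N^{u\ell}$); an existing join $\bigvee S$ is distributive if $a\wedge\bigvee S=\bigvee\{a\wedge s:s\in S\}$ for all $a$; a D-ideal is a downset containing $\bigvee S$ for each subset $S$ of it with distributive join; $\mathcal{BL} A$ is the frame of D-ideals, and $\mathcal{DM} A\subseteq\mathcal{BL} A$. A relative annihilator is $\langle a,b\rangle=\{x:a\wedge x\le b\}$; $A$ is proHeyting if every relative annihilator is a normal ideal. A $\kappa$-join is a join of fewer than $\kappa$ elements. $\mathcal{BL}_\kappa(\mathcal{DM} A)$ is the sub-$\kappa$-frame of $\mathcal{BL} A$ generated by $\mathcal{DM} A$ (closure under finite meets and $\kappa$-joins in $\mathcal{BL} A$). $A$ is $\kappa$-proHeyting if $\mathcal{BL}_\kappa(\mathcal{DM} A)=\mathcal{DM} A$. $\kappa\mathbf{proH}$ (resp. $\mathbf{proH}$) is the class of $\kappa$-proHeyting (resp. proHeyting) bounded distributive lattices; $\kappa\mathbf{JD}$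 is the class of bounded distributive lattices in which every existing $\kappa$-join is distributive; $\omega_0$ is the first infinite cardinal. *)

theory Defs
  imports Main
begin

definition is_lub :: "'a set \<Rightarrow> ('a \<Rightarrow> 'a \<Rightarrow> bool) \<Rightarrow> 'a set \<Rightarrow> 'a \<Rightarrow> bool" where
  "is_lub S le X j \<longleftrightarrow> j \<in> S \<and> (\<forall>x\<in>X. le x j) \<and> (\<forall>u\<in>S. (\<forall>x\<in>X. le x u) \<longrightarrow> le j u)"

definition is_glb :: "'a set \<Rightarrow> ('a \<Rightarrow> 'a \<Rightarrow> bool) \<Rightarrow> 'a set \<Rightarrow> 'a \<Rightarrow> bool" where
  "is_glb S le X m \<longleftrightarrow> m \<in> S \<and> (\<forall>x\<in>X. le m x) \<and> (\<forall>u\<in>S. (\<forall>x\<in>X. le u x) \<longrightarrow> le u m)"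

definition lmeet :: "'a set \<Rightarrow> ('a \<Rightarrow> 'a \<Rightarrow> bool) \<Rightarrow> 'a \<Rightarrow> 'a \<Rightarrow> 'a" where
  "lmeet S le a b = (THE m. is_glb S le {a, b} m)"

definition ljoin :: "'a set \<Rightarrow> ('a \<Rightarrow> 'a \<Rightarrow> bool) \<Rightarrow> 'a \<Rightarrow> 'a \<Rightarrow> 'a" where
  "ljoin S le a b = (THE j. is_lub S le {a, b} j)"

definition bdlat :: "'a set \<Rightarrow> ('a \<Rightarrow> 'a \<Rightarrow> bool) \<Rightarrow> bool" where
  "bdlat S le \<longleftrightarrow>
     (\<forall>x\<in>S. le x x) \<and>
     (\<forall>x\<in>S. \<forall>y\<in>S. le x y \<and> le y x \<longrightarrow> x = y) \<and>
     (\<forall>x\<in>S. \<forall>y\<in>S. \<forall>z\<in>S. le x y \<and> le y z \<longrightarrow> le x z) \<and>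
     (\<forall>a\<in>S. \<forall>b\<in>S. \<exists>j. is_lub S le {a, b} j) \<and>
     (\<forall>a\<in>S. \<forall>b\<in>S. \<exists>m. is_glb S le {a, b} m) \<and>
     (\<exists>t\<in>S. \<forall>x\<in>S. le x t) \<and>
     (\<exists>z\<in>S. \<forall>x\<in>S. le z x) \<and>
     (\<forall>a\<in>S. \<forall>b\<in>S. \<forall>c\<in>S.
        lmeet S le a (ljoin S le b c) = ljoin S le (lmeet S le a b) (lmeet S le a c))"

definition ubs :: "'a set \<Rightarrow> ('a \<Rightarrow> 'a \<Rightarrow> bool) \<Rightarrow> 'a set \<Rightarrow> 'a set" where
  "ubs S le X = {u \<in> S. \<forall>x\<in>X. le x u}"

definition lbs :: "'a set \<Rightarrow> ('a \<Rightarrow> 'a \<Rightarrow> bool) \<Rightarrow> 'a set \<Rightarrow> 'a set" where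
  "lbs S le X = {l \<in> S. \<forall>x\<in>X. le l x}"

definition normal_ideal :: "'a set \<Rightarrow> ('a \<Rightarrow> 'a \<Rightarrow> bool) \<Rightarrow> 'a set \<Rightarrow> bool" where
  "normal_ideal S le N \<longleftrightarrow> N \<subseteq> S \<and> N = lbs S le (ubs S le N)"

definition DM :: "'a set \<Rightarrow> ('a \<Rightarrow> 'a \<Rightarrow> bool) \<Rightarrow> 'a set set" where
  "DM S le = {N. normal_ideal S le N}"

definition dist_join :: "'a set \<Rightarrow> ('a \<Rightarrow> 'a \<Rightarrow> bool) \<Rightarrow> 'a set \<Rightarrow> 'a \<Rightarrow> bool" where
  "dist_join S le X j \<longleftrightarrow> X \<subseteq> S \<and> is_lub S le X j \<and>
     (\<forall>a\<in>S. is_lub S le ((\<lambda>s. lmeet S le a s) ` X) (lmeet S le a j))"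

definition D_ideal :: "'a set \<Rightarrow> ('a \<Rightarrow> 'a \<Rightarrow> bool) \<Rightarrow> 'a set \<Rightarrow> bool" where
  "D_ideal S le I \<longleftrightarrow> I \<subseteq> S \<and> (\<forall>x\<in>I. \<forall>y\<in>S. le y x \<longrightarrow> y \<in> I) \<and>
     (\<forall>X j. X \<subseteq> I \<and> dist_join S le X j \<longrightarrow> j \<in> I)"

definition BL :: "'a set \<Rightarrow> ('a \<Rightarrow> 'a \<Rightarrow> bool) \<Rightarrow> 'a set set" where
  "BL S le = {I. D_ideal S le I}"

definition BL_join :: "'a set \<Rightarrow> ('a \<Rightarrow> 'a \<Rightarrow> bool) \<Rightarrow> 'a set set \<Rightarrow> 'a set" where
  "BL_join S le F = \<Inter>{I \<in> BL S le. \<Union>F \<subseteq> I}"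

inductive_set BLk :: "'k rel \<Rightarrow> 'a set \<Rightarrow> ('a \<Rightarrow> 'a \<Rightarrow> bool) \<Rightarrow> 'a set set"
  for \<kappa> :: "'k rel" and S :: "'a set" and le :: "'a \<Rightarrow> 'a \<Rightarrow> bool" where
  base: "N \<in> DM S le \<Longrightarrow> N \<in> BLk \<kappa> S le"
| top: "S \<in> BLk \<kappa> S le"
| meet: "I \<in> BLk \<kappa> S le \<Longrightarrow> J \<in> BLk \<kappa> S le \<Longrightarrow> I \<inter> J \<in> BLk \<kappa> S le"
| join: "(\<And>I. I \<in> F \<Longrightarrow> I \<in> BLk \<kappa> S le) \<Longrightarrow> (card_of F, \<kappa>) \<in> ordLess \<Longrightarrow> BL_join S le F \<in> BLk \<kappa> S le"

definition kproH :: "'k rel \<Rightarrow> 'a set \<Rightarrow> ('a \<Rightarrow> 'a \<Rightarrow> bool) \<Rightarrow> bool" where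
  "kproH \<kappa> S le \<longleftrightarrow> BLk \<kappa> S le = DM S le"

definition rel_ann :: "'a set \<Rightarrow> ('a \<Rightarrow> 'a \<Rightarrow> bool) \<Rightarrow> 'a \<Rightarrow> 'a \<Rightarrow> 'a set" where
  "rel_ann S le a b = {x \<in> S. le (lmeet S le a x) b}"

definition proH :: "'a set \<Rightarrow> ('a \<Rightarrow> 'a \<Rightarrow> bool) \<Rightarrow> bool" where
  "proH S le \<longleftrightarrow> (\<forall>a\<in>S. \<forall>b\<in>S. normal_ideal S le (rel_ann S le a b))"

definition kJD :: "'k rel \<Rightarrow> 'a set \<Rightarrow> ('a \<Rightarrow> 'a \<Rightarrow> bool) \<Rightarrow> bool" where
  "kJD \<kappa> S le \<longleftrightarrow> (\<forall>X j. X \<subseteq> S \<and> (card_of X, \<kappa>) \<in> ordLess \<and> is_lub S le X j \<longrightarrow> dist_join S le X j)"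

definition regular_card :: "'k rel \<Rightarrow> bool" where
  "regular_card \<kappa> \<longleftrightarrow> Card_order \<kappa> \<and> \<not> finite (Field \<kappa>) \<and> regularCard \<kappa>"

end

theory Submission
  imports Defs
begin

lemma is_lub_unique:
  assumes "\<forall>x\<in>S. \<forall>y\<in>S. le x y \<and> le y x \<longrightarrow> x = y"
    and "is_lub S le X j" "is_lub S le X j'"
  shows "j = j'"
  using assms unfolding is_lub_def by blast

lemma is_glb_unique:
  assumes "\<forall>x\<in>S. \<forall>y\<in>S. le x y \<and> le y x \<longrightarrow> x = y"
    and "is_glb S le X j" "is_glb S le X j'"
  shows "j = j'"
  using assms unfolding is_glb_def by blast

locale bdl =
  fixes S :: "'a set" and le :: "'a \<Rightarrow> 'a \<Rightarrow> bool"
  assumes bd: "bdlat S le"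
begin

lemma refl: "x \<in> S \<Longrightarrow> le x x" using bd unfolding bdlat_def by blast
lemma antisym: "x \<in> S \<Longrightarrow> y \<in> S \<Longrightarrow> le x y \<Longrightarrow> le y x \<Longrightarrow> x = y"
  using bd unfolding bdlat_def by blast
lemma trans: "x \<in> S \<Longrightarrow> y \<in> S \<Longrightarrow> z \<in> S \<Longrightarrow> le x y \<Longrightarrow> le y z \<Longrightarrow> le x z"
  using bd unfolding bdlat_def by blast
lemma antisym': "\<forall>x\<in>S. \<forall>y\<in>S. le x y \<and> le y x \<longrightarrow> x = y" using antisym by blast

lemma meet_glb: assumes "a \<in> S" "b \<in> S" shows "is_glb S le {a,b} (lmeet S le a b)"
proof -
  obtain m where m: "is_glb S le {a,b} m" using bd assms unfolding bdlat_def by blast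
  show ?thesis unfolding lmeet_def
    by (rule theI[of _ m]) (use m is_glb_unique[OF antisym'] in blast)+
qed

lemma join_lub: assumes "a \<in> S" "b \<in> S" shows "is_lub S le {a,b} (ljoin S le a b)"
proof -
  obtain m where m: "is_lub S le {a,b} m" using bd assms unfolding bdlat_def by blast
  show ?thesis unfolding ljoin_def
    by (rule theI[of _ m]) (use m is_lub_unique[OF antisym'] in blast)+
qed

lemma meet_in: "a \<in> S \<Longrightarrow> b \<in> S \<Longrightarrow> lmeet S le a b \<in> S"
  using meet_glb unfolding is_glb_def by blast
lemma meet_le1: "a \<in> S \<Longrightarrow> b \<in> S \<Longrightarrow> le (lmeet S le a b) a"
  using meet_glb unfolding is_glb_def by blast
lemma meet_le2: "a \<in> S \<Longrightarrow> b \<in> S \<Longrightarrow> le (lmeet S le a b) b"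
  using meet_glb unfolding is_glb_def by blast
lemma meet_greatest: "a \<in> S \<Longrightarrow> b \<in> S \<Longrightarrow> c \<in> S \<Longrightarrow> le c a \<Longrightarrow> le c b \<Longrightarrow> le c (lmeet S le a b)"
  using meet_glb unfolding is_glb_def by blast
lemma join_in: "a \<in> S \<Longrightarrow> b \<in> S \<Longrightarrow> ljoin S le a b \<in> S"
  using join_lub unfolding is_lub_def by blast
lemma join_ge1: "a \<in> S \<Longrightarrow> b \<in> S \<Longrightarrow> le a (ljoin S le a b)"
  using join_lub unfolding is_lub_def by blast
lemma join_ge2: "a \<in> S \<Longrightarrow> b \<in> S \<Longrightarrow> le b (ljoin S le a b)"
  using join_lub unfolding is_lub_def by blast
lemma join_least: "a \<in> S \<Longrightarrow> b \<in> S \<Longrightarrow> c \<in> S \<Longrightarrow> le a c \<Longrightarrow> le b c \<Longrightarrow> le (ljoin S le a b) c"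
  using join_lub unfolding is_lub_def by blast
lemma distrib: "a \<in> S \<Longrightarrow> b \<in> S \<Longrightarrow> c \<in> S \<Longrightarrow>
  lmeet S le a (ljoin S le b c) = ljoin S le (lmeet S le a b) (lmeet S le a c)"
  using bd unfolding bdlat_def by blast
lemma bot_ex: "\<exists>z\<in>S. \<forall>x\<in>S. le z x" using bd unfolding bdlat_def by blast
lemma top_ex: "\<exists>t\<in>S. \<forall>x\<in>S. le x t" using bd unfolding bdlat_def by blast

lemma meet_mono: "a \<in> S \<Longrightarrow> x \<in> S \<Longrightarrow> y \<in> S \<Longrightarrow> le x y \<Longrightarrow> le (lmeet S le a x) (lmeet S le a y)"
  by (meson meet_greatest meet_in meet_le1 meet_le2 trans)

lemma meet_idem: "a \<in> S \<Longrightarrow> lmeet S le a a = a"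
  by (meson antisym meet_greatest meet_in meet_le1 refl)

lemma meet_absorb: "a \<in> S \<Longrightarrow> b \<in> S \<Longrightarrow> le a b \<Longrightarrow> lmeet S le a b = a"
  by (meson antisym meet_greatest meet_in meet_le1 refl)

end

lemma lbs_sub: "lbs S le X \<subseteq> S" unfolding lbs_def by blast
lemma ubs_sub: "ubs S le X \<subseteq> S" unfolding ubs_def by blast
lemma lbs_ubs_ext:
  assumes "X \<subseteq> S" shows "X \<subseteq> lbs S le (ubs S le X)"
  using assms unfolding lbs_def ubs_def by blast
lemma lbs_ubs_mono:
  assumes "X \<subseteq> Y" shows "lbs S le (ubs S le X) \<subseteq> lbs S le (ubs S le Y)"
  using assms unfolding lbs_def ubs_def by blast

lemma normal_le: "normal_ideal S le N \<Longrightarrow> X \<subseteq> N \<Longrightarrow> lbs S le (ubs S le X) \<subseteq> N"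
  unfolding normal_ideal_def using lbs_ubs_mono by blast

lemma normal_Int: "normal_ideal S le N1 \<Longrightarrow> normal_ideal S le N2 \<Longrightarrow> normal_ideal S le (N1 \<inter> N2)"
proof -
  assume a: "normal_ideal S le N1" "normal_ideal S le N2"
  have "lbs S le (ubs S le (N1 \<inter> N2)) \<subseteq> N1" by (rule normal_le[OF a(1)]) blast
  moreover have "lbs S le (ubs S le (N1 \<inter> N2)) \<subseteq> N2" by (rule normal_le[OF a(2)]) blast
  moreover have "N1 \<inter> N2 \<subseteq> S" using a unfolding normal_ideal_def by blast
  ultimately show ?thesis unfolding normal_ideal_def using lbs_ubs_ext[of "N1 \<inter> N2" S le] by blast
qed

lemma normal_top: "normal_ideal S le S"
  unfolding normal_ideal_def by (meson lbs_sub lbs_ubs_ext order_refl subset_antisym)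

lemma DM_BLk: "DM S le \<subseteq> BLk \<kappa> S le" using BLk.base by blast

lemma BLk_mono:
  assumes "(lam, \<kappa>) \<in> ordLeq"
  shows "I \<in> BLk lam S le \<Longrightarrow> I \<in> BLk \<kappa> S le"
proof (induction rule: BLk.induct)
  case (base N) then show ?case by (rule BLk.base)
next
  case top then show ?case by (rule BLk.top)
next
  case (meet I J) then show ?case by (simp add: BLk.meet)
next
  case (join F) then show ?case by (intro BLk.join) (auto intro: ordLess_ordLeq_trans[OF _ assms])
qed

definition down :: "'a set \<Rightarrow> ('a \<Rightarrow> 'a \<Rightarrow> bool) \<Rightarrow> 'a \<Rightarrow> 'a set" where
  "down S le c = {x \<in> S. le x c}"

lemma D_ideal_sub: "D_ideal S le I \<Longrightarrow> I \<subseteq> S" unfolding D_ideal_def by (elim conjE)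
lemma D_ideal_down: "D_ideal S le I \<Longrightarrow> x \<in> I \<Longrightarrow> y \<in> S \<Longrightarrow> le y x \<Longrightarrow> y \<in> I"
  unfolding D_ideal_def by (elim conjE) blast
lemma D_ideal_join: "D_ideal S le I \<Longrightarrow> X \<subseteq> I \<Longrightarrow> dist_join S le X j \<Longrightarrow> j \<in> I"
  unfolding D_ideal_def by (elim conjE) blast

lemma D_ideal_S: "D_ideal S le S"
  unfolding D_ideal_def dist_join_def is_lub_def by simp

lemma BL_join_D:
  assumes "\<Union>F \<subseteq> S" shows "D_ideal S le (BL_join S le F)"
proof -
  have Sin: "S \<in> {I \<in> BL S le. \<Union>F \<subseteq> I}" using assms D_ideal_S unfolding BL_def by blast
  show ?thesis unfolding BL_join_def D_ideal_def
  proof (intro conjI allI impI ballI)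
    show "\<Inter>{I \<in> BL S le. \<Union>F \<subseteq> I} \<subseteq> S" using Sin by blast
  next
    fix x y assume a: "x \<in> \<Inter>{I \<in> BL S le. \<Union>F \<subseteq> I}" "y \<in> S" "le y x"
    show "y \<in> \<Inter>{I \<in> BL S le. \<Union>F \<subseteq> I}"
    proof
      fix I assume "I \<in> {I \<in> BL S le. \<Union>F \<subseteq> I}"
      then have "D_ideal S le I" "x \<in> I" using a unfolding BL_def by auto
      then show "y \<in> I" using a unfolding D_ideal_def by blast
    qed
  next
    fix X j assume a: "X \<subseteq> \<Inter>{I \<in> BL S le. \<Union>F \<subseteq> I} \<and> dist_join S le X j"
    show "j \<in> \<Inter>{I \<in> BL S le. \<Union>F \<subseteq> I}"
    proof
      fix I assume "I \<in> {I \<in> BL S le. \<Union>F \<subseteq> I}"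
      then have "D_ideal S le I" "X \<subseteq> I" using a unfolding BL_def by auto
      then show "j \<in> I" using a unfolding D_ideal_def by blast
    qed
  qed
qed

lemma BL_join_least: "D_ideal S le I \<Longrightarrow> \<Union>F \<subseteq> I \<Longrightarrow> BL_join S le F \<subseteq> I"
  unfolding BL_join_def BL_def by blast

lemma BL_join_upper: "\<Union>F \<subseteq> BL_join S le F"
  unfolding BL_join_def by blast

context bdl begin

lemma normal_D: assumes "normal_ideal S le N" shows "D_ideal S le N"
  unfolding D_ideal_def
proof (intro conjI allI impI ballI)
  show "N \<subseteq> S" using assms unfolding normal_ideal_def by blast
next
  fix x y assume xy: "x \<in> N" "y \<in> S" "le y x"
  have xS: "x \<in> lbs S le (ubs S le N)" using xy assms unfolding normal_ideal_def by blast
  have "y \<in> lbs S le (ubs S le N)" unfolding lbs_def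
  proof (intro CollectI conjI ballI)
    show "y \<in> S" by fact
    fix u assume u: "u \<in> ubs S le N"
    then have "u \<in> S" "le x u" using xS unfolding lbs_def ubs_def by auto
    moreover have "x \<in> S" using xS unfolding lbs_def by blast
    ultimately show "le y u" using trans[of y x u] xy by blast
  qed
  then show "y \<in> N" using assms unfolding normal_ideal_def by blast
next
  fix X j assume h: "X \<subseteq> N \<and> dist_join S le X j"
  have "j \<in> lbs S le (ubs S le N)" unfolding lbs_def
  proof (intro CollectI conjI ballI)
    show "j \<in> S" using h unfolding dist_join_def is_lub_def by blast
    fix u assume "u \<in> ubs S le N"
    then have "u \<in> S" "\<forall>x\<in>X. le x u" using h unfolding ubs_def by auto
    then show "le j u" using h unfolding dist_join_def is_lub_def by blast
  qed
  then show "j \<in> N" using assms unfolding normal_ideal_def by blast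
qed

lemma down_normal: assumes "c \<in> S" shows "normal_ideal S le (down S le c)"
proof -
  have "c \<in> ubs S le (down S le c)" using assms unfolding ubs_def down_def by auto
  then have "lbs S le (ubs S le (down S le c)) \<subseteq> down S le c"
    unfolding lbs_def down_def by auto
  moreover have "down S le c \<subseteq> S" unfolding down_def by auto
  ultimately show ?thesis unfolding normal_ideal_def using lbs_ubs_ext by blast
qed

lemma rel_ann_D: assumes "a \<in> S" "b \<in> S" shows "D_ideal S le (rel_ann S le a b)"
  unfolding D_ideal_def
proof (intro conjI allI impI ballI)
  show "rel_ann S le a b \<subseteq> S" unfolding rel_ann_def by auto
next
  fix x y assume h: "x \<in> rel_ann S le a b" "y \<in> S" "le y x"
  then have x: "x \<in> S" "le (lmeet S le a x) b" unfolding rel_ann_def by auto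
  have "le (lmeet S le a y) (lmeet S le a x)" using meet_mono assms h x by blast
  then have "le (lmeet S le a y) b" using trans[OF meet_in[OF assms(1) h(2)] meet_in[OF assms(1) x(1)] assms(2)] x by blast
  then show "y \<in> rel_ann S le a b" unfolding rel_ann_def using h by blast
next
  fix X j assume h: "X \<subseteq> rel_ann S le a b \<and> dist_join S le X j"
  then have l: "is_lub S le ((\<lambda>s. lmeet S le a s) ` X) (lmeet S le a j)" and jS: "j \<in> S"
    using assms unfolding dist_join_def is_lub_def by auto
  have "\<forall>x\<in>(\<lambda>s. lmeet S le a s) ` X. le x b"
  proof
    fix x assume "x \<in> (\<lambda>s. lmeet S le a s) ` X"
    then obtain s where "s \<in> X" "x = lmeet S le a s" by blast
    then show "le x b" using h unfolding rel_ann_def by blast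
  qed
  then have "le (lmeet S le a j) b" using l assms(2) unfolding is_lub_def by blast
  then show "j \<in> rel_ann S le a b" unfolding rel_ann_def using jS by blast
qed

lemma D_ideal_BL_join_down:
  assumes "D_ideal S le I" shows "BL_join S le ((\<lambda>x. down S le x) ` I) = I"
proof (rule subset_antisym)
  have "\<Union>((\<lambda>x. down S le x) ` I) \<subseteq> I"
  proof
    fix y assume "y \<in> \<Union>((\<lambda>x. down S le x) ` I)"
    then obtain x where x: "x \<in> I" "y \<in> down S le x" by (rule UN_E)
    then have "y \<in> S" "le y x" unfolding down_def by auto
    then show "y \<in> I" using D_ideal_down[OF assms x(1)] by blast
  qed
  then show "BL_join S le ((\<lambda>x. down S le x) ` I) \<subseteq> I" by (rule BL_join_least[OF assms])
next
  have "I \<subseteq> \<Union>((\<lambda>x. down S le x) ` I)"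
  proof
    fix x assume x: "x \<in> I"
    then have "x \<in> S" using D_ideal_sub[OF assms] by blast
    then have "x \<in> down S le x" unfolding down_def using refl by blast
    then show "x \<in> \<Union>((\<lambda>x. down S le x) ` I)" using x by (rule UN_I[rotated])
  qed
  then show "I \<subseteq> BL_join S le ((\<lambda>x. down S le x) ` I)" using BL_join_upper by (rule subset_trans)
qed

end

lemma kproH_mono:
  assumes "(lam, \<kappa>) \<in> ordLeq" "kproH \<kappa> S le" shows "kproH lam S le"
proof -
  have "BLk lam S le \<subseteq> BLk \<kappa> S le" using BLk_mono[OF assms(1)] by blast
  then show ?thesis using assms(2) DM_BLk[of S le lam] unfolding kproH_def by blast
qed

context bdl begin

lemma proH_D_normal:
  assumes pH: "proH S le" and I: "D_ideal S le I"
  shows "normal_ideal S le I"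
proof -
  have IS: "I \<subseteq> S" by (rule D_ideal_sub[OF I])
  have "lbs S le (ubs S le I) \<subseteq> I"
  proof
    fix z assume z: "z \<in> lbs S le (ubs S le I)"
    have zS: "z \<in> S" using subsetD[OF lbs_sub z] .
    have ra: "\<And>c u. c \<in> S \<Longrightarrow> u \<in> S \<Longrightarrow> I \<subseteq> rel_ann S le c u \<Longrightarrow> le (lmeet S le c z) u"
    proof -
      fix c u assume cu: "c \<in> S" "u \<in> S" "I \<subseteq> rel_ann S le c u"
      have "normal_ideal S le (rel_ann S le c u)" by (rule bspec[OF bspec[OF pH[unfolded proH_def] cu(1)] cu(2)])
      then have "lbs S le (ubs S le I) \<subseteq> rel_ann S le c u" using cu(3) by (rule normal_le)
      then have "z \<in> rel_ann S le c u" using z by (rule subsetD)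
      then show "le (lmeet S le c z) u" unfolding rel_ann_def by blast
    qed
    define X where "X = (\<lambda>x. lmeet S le z x) ` I"
    have XI: "X \<subseteq> I"
    proof
      fix s assume "s \<in> X"
      then obtain x where x0: "s = lmeet S le z x" "x \<in> I" unfolding X_def by (rule imageE)
      note x = x0(2,1)
      have xS: "x \<in> S" using x IS by blast
      show "s \<in> I" using D_ideal_down[OF I x(1) meet_in[OF zS xS] meet_le2[OF zS xS]] x by simp
    qed
    have XS: "X \<subseteq> S" using XI IS by blast
    have lub: "is_lub S le X z"
      unfolding is_lub_def
    proof (intro conjI ballI impI)
      show "z \<in> S" by fact
    next
      fix s assume "s \<in> X"
      then obtain x where x0: "s = lmeet S le z x" "x \<in> I" unfolding X_def by (rule imageE)
      have xS: "x \<in> S" using x0 IS by blast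
      show "le s z" unfolding x0(1) by (rule meet_le1[OF zS xS])
    next
      fix u assume u: "u \<in> S" "\<forall>s\<in>X. le s u"
      have "I \<subseteq> rel_ann S le z u"
      proof
        fix x assume x: "x \<in> I"
        then have "lmeet S le z x \<in> X" unfolding X_def by (rule imageI)
        then have "le (lmeet S le z x) u" by (rule bspec[OF u(2)])
        then show "x \<in> rel_ann S le z u" unfolding rel_ann_def using x IS by blast
      qed
      then have "le (lmeet S le z z) u" using ra zS u by blast
      then show "le z u" using meet_idem[OF zS] by simp
    qed
    have dist: "\<forall>a\<in>S. is_lub S le ((\<lambda>s. lmeet S le a s) ` X) (lmeet S le a z)"
    proof
      fix a assume aS: "a \<in> S"
      define c where "c = lmeet S le a z"
      have cS: "c \<in> S" unfolding c_def using meet_in aS zS by blast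
      have ca: "le c a" unfolding c_def using meet_le1 aS zS by blast
      have cz: "le c z" unfolding c_def using meet_le2 aS zS by blast
      show "is_lub S le ((\<lambda>s. lmeet S le a s) ` X) (lmeet S le a z)"
        unfolding is_lub_def c_def[symmetric]
      proof (intro conjI ballI impI)
        show "c \<in> S" by fact
      next
        fix t assume "t \<in> (\<lambda>s. lmeet S le a s) ` X"
        then obtain s where s: "t = lmeet S le a s" "s \<in> X" by (rule imageE)
        from s(2) obtain x where x0: "s = lmeet S le z x" "x \<in> I" unfolding X_def by (rule imageE)
        have x: "x \<in> I" "t = lmeet S le a (lmeet S le z x)" using s x0 by simp_all
        have xS: "x \<in> S" using x IS by blast
        show "le t c" unfolding x(2) c_def
          by (rule meet_mono[OF aS meet_in[OF zS xS] zS meet_le1[OF zS xS]])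
      next
        fix u assume u: "u \<in> S" "\<forall>t\<in>(\<lambda>s. lmeet S le a s) ` X. le t u"
        have "I \<subseteq> rel_ann S le c u"
        proof
          fix x assume x: "x \<in> I"
          have xS: "x \<in> S" using x IS by blast
          have zx: "lmeet S le z x \<in> S" using meet_in zS xS by blast
          have cx: "lmeet S le c x \<in> S" using meet_in cS xS by blast
          have azx: "lmeet S le a (lmeet S le z x) \<in> S" using meet_in aS zx by blast
          have "lmeet S le z x \<in> X" unfolding X_def using x by (rule imageI)
          then have "lmeet S le a (lmeet S le z x) \<in> (\<lambda>s. lmeet S le a s) ` X" by (rule imageI)
          then have 1: "le (lmeet S le a (lmeet S le z x)) u" by (rule bspec[OF u(2)])
          have 2: "le (lmeet S le c x) (lmeet S le a (lmeet S le z x))"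
          proof (rule meet_greatest[OF aS zx cx])
            show "le (lmeet S le c x) a" using trans[OF cx cS aS meet_le1[OF cS xS] ca] .
            show "le (lmeet S le c x) (lmeet S le z x)"
            proof (rule meet_greatest[OF zS xS cx])
              show "le (lmeet S le c x) z" using trans[OF cx cS zS meet_le1[OF cS xS] cz] .
              show "le (lmeet S le c x) x" using meet_le2[OF cS xS] .
            qed
          qed
          have "le (lmeet S le c x) u" using trans[OF cx azx u(1) 2 1] .
          then show "x \<in> rel_ann S le c u" unfolding rel_ann_def using xS by blast
        qed
        then have "le (lmeet S le c z) u" using ra cS u by blast
        then show "le c u" using meet_absorb[OF cS zS cz] by simp
      qed
    qed
    have "dist_join S le X z" unfolding dist_join_def using XS lub dist by blast
    then show "z \<in> I" using D_ideal_join[OF I XI] by blast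
  qed
  then show ?thesis unfolding normal_ideal_def using IS lbs_ubs_ext[OF IS] by blast
qed

lemma proH_kproH:
  assumes pH: "proH S le" shows "kproH \<kappa> S le"
proof -
  have "I \<in> BLk \<kappa> S le \<Longrightarrow> normal_ideal S le I" for I
  proof (induction rule: BLk.induct)
    case (base N) then show ?case unfolding DM_def by blast
  next
    case top then show ?case by (rule normal_top)
  next
    case (meet I J) then show ?case using normal_Int by blast
  next
    case (join F)
    have "\<Union>F \<subseteq> S" using join.IH unfolding normal_ideal_def by blast
    then show ?case using proH_D_normal[OF pH BL_join_D] by blast
  qed
  then have "BLk \<kappa> S le \<subseteq> DM S le" unfolding DM_def by blast
  then show ?thesis unfolding kproH_def using DM_BLk by blast
qed

lemma kproH_kJD:
  assumes kp: "kproH \<kappa> S le" shows "kJD \<kappa> S le"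
  unfolding kJD_def
proof (intro allI impI, elim conjE)
  fix X j assume XS: "X \<subseteq> S" and card: "(card_of X, \<kappa>) \<in> ordLess" and lub: "is_lub S le X j"
  have jS: "j \<in> S" using lub unfolding is_lub_def by blast
  define F where "F = (\<lambda>x. down S le x) ` X"
  have Fc: "(card_of F, \<kappa>) \<in> ordLess" unfolding F_def by (rule ordLeq_ordLess_trans[OF card_of_image card])
  have FB: "\<And>I. I \<in> F \<Longrightarrow> I \<in> BLk \<kappa> S le"
  proof -
    fix I assume "I \<in> F"
    then obtain x where "x \<in> X" "I = down S le x" unfolding F_def by blast
    then have "normal_ideal S le I" using down_normal XS by blast
    then show "I \<in> BLk \<kappa> S le" using BLk.base unfolding DM_def by blast
  qed
  define J where "J = BL_join S le F"
  have "J \<in> BLk \<kappa> S le" unfolding J_def by (rule BLk.join[OF FB Fc])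
  then have Jn: "normal_ideal S le J" using kp unfolding kproH_def DM_def by blast
  have XJ: "X \<subseteq> J"
  proof
    fix x assume x: "x \<in> X"
    then have "x \<in> S" using XS by blast
    then have "x \<in> down S le x" using local.refl unfolding down_def by blast
    moreover have "down S le x \<in> F" using x unfolding F_def by (rule imageI)
    ultimately have "x \<in> \<Union>F" by (rule UnionI[rotated])
    then show "x \<in> J" using BL_join_upper[of F S le] unfolding J_def by (rule subsetD[rotated])
  qed
  have "\<forall>a\<in>S. is_lub S le ((\<lambda>s. lmeet S le a s) ` X) (lmeet S le a j)"
  proof
    fix a assume aS: "a \<in> S"
    show "is_lub S le ((\<lambda>s. lmeet S le a s) ` X) (lmeet S le a j)"
      unfolding is_lub_def
    proof (intro conjI ballI impI)
      show "lmeet S le a j \<in> S" using meet_in aS jS by blast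
    next
      fix t assume "t \<in> (\<lambda>s. lmeet S le a s) ` X"
      then obtain x where x: "x \<in> X" "t = lmeet S le a x" by blast
      have xS: "x \<in> S" using x XS by blast
      have "le x j" using lub x unfolding is_lub_def by blast
      then show "le t (lmeet S le a j)" unfolding x(2) by (rule meet_mono[OF aS xS jS])
    next
      fix u assume u: "u \<in> S" "\<forall>t\<in>(\<lambda>s. lmeet S le a s) ` X. le t u"
      have R: "D_ideal S le (rel_ann S le a u)" using rel_ann_D aS u by blast
      have "\<Union>F \<subseteq> rel_ann S le a u"
      proof
        fix y assume "y \<in> \<Union>F"
        then obtain I where I: "I \<in> F" "y \<in> I" by (rule UnionE)
        from I(1) obtain x where x0: "I = down S le x" "x \<in> X" unfolding F_def by (erule imageE)
        have x: "x \<in> X" "y \<in> down S le x" using x0 I by simp_all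
        have yS: "y \<in> S" "le y x" using x unfolding down_def by auto
        have xS: "x \<in> S" using x XS by blast
        have 1: "le (lmeet S le a y) (lmeet S le a x)" using meet_mono[OF aS yS(1) xS yS(2)] .
        have "lmeet S le a x \<in> (\<lambda>s. lmeet S le a s) ` X" using x(1) by (rule imageI)
        then have 2: "le (lmeet S le a x) u" by (rule bspec[OF u(2)])
        have "le (lmeet S le a y) u" using trans[OF meet_in[OF aS yS(1)] meet_in[OF aS xS] u(1) 1 2] .
        then show "y \<in> rel_ann S le a u" unfolding rel_ann_def using yS by blast
      qed
      then have "J \<subseteq> rel_ann S le a u" unfolding J_def using BL_join_least[OF R] by blast
      moreover have "j \<in> J"
      proof -
        have "j \<in> lbs S le (ubs S le J)" unfolding lbs_def
        proof (intro CollectI conjI ballI)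
          show "j \<in> S" by fact
          fix v assume "v \<in> ubs S le J"
          then have vS: "v \<in> S" and vJ: "\<forall>y\<in>J. le y v" unfolding ubs_def by auto
          have "\<forall>x\<in>X. le x v" using vJ XJ by (simp add: subset_iff)
          note vS this
          then show "le j v" using lub unfolding is_lub_def by blast
        qed
        then show ?thesis using Jn unfolding normal_ideal_def by blast
      qed
      ultimately show "le (lmeet S le a j) u" unfolding rel_ann_def by blast
    qed
  qed
  then show "dist_join S le X j" unfolding dist_join_def using XS lub by blast
qed

end

context bdl begin

lemma fin_lub_in:
  assumes "finite X"
  shows "X \<subseteq> R \<Longrightarrow> R \<subseteq> S \<Longrightarrow> (\<forall>z\<in>S. (\<forall>x\<in>S. le z x) \<longrightarrow> z \<in> R) \<Longrightarrow>
    (\<forall>x\<in>R. \<forall>y\<in>R. ljoin S le x y \<in> R) \<Longrightarrow> \<exists>j. is_lub S le X j \<and> j \<in> R"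
  using assms
proof (induction X rule: finite_induct)
  case empty
  obtain z where z: "z \<in> S" "\<forall>x\<in>S. le z x" using bot_ex by blast
  have "is_lub S le {} z" unfolding is_lub_def using z by simp
  moreover have "z \<in> R" using empty(3) z by blast
  ultimately show ?case by blast
next
  case (insert x F)
  have FR: "F \<subseteq> R" using insert(4) by simp
  obtain j' where j': "is_lub S le F j'" "j' \<in> R" using insert(3)[OF FR insert(5,6,7)] by blast
  have xR: "x \<in> R" using insert(4) by simp
  have xS: "x \<in> S" using xR insert(5) by (rule subsetD[rotated])
  have j'S: "j' \<in> S" using j'(2) insert(5) by (rule subsetD[rotated])
  define j where "j = ljoin S le x j'"
  have jS: "j \<in> S" unfolding j_def by (rule join_in[OF xS j'S])
  have "is_lub S le (insert x F) j"
    unfolding is_lub_def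
  proof (intro conjI ballI impI)
    show "j \<in> S" by fact
  next
    fix y assume y: "y \<in> insert x F"
    show "le y j"
    proof (cases "y = x")
      case True then show ?thesis unfolding j_def using join_ge1[OF xS j'S] by simp
    next
      case False
      then have yF: "y \<in> F" using y by simp
      have yS: "y \<in> S" using yF FR insert(5) by blast
      have "le y j'" using j'(1) yF unfolding is_lub_def by blast
      then show ?thesis unfolding j_def using trans[OF yS j'S jS[unfolded j_def]] join_ge2[OF xS j'S] by blast
    qed
  next
    fix u assume u: "u \<in> S" "\<forall>y\<in>insert x F. le y u"
    have "le j' u" using j'(1) u unfolding is_lub_def by simp
    moreover have "le x u" using u by simp
    ultimately show "le j u" unfolding j_def by (rule join_least[OF xS j'S u(1), rotated])
  qed
  moreover have "j \<in> R" unfolding j_def using insert(7) xR j'(2) by blast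
  ultimately show ?case by blast
qed

lemma rel_ann_closed:
  assumes aS: "a \<in> S" and uS: "u \<in> S"
  shows "rel_ann S le a u \<subseteq> S"
    "\<forall>z\<in>S. (\<forall>x\<in>S. le z x) \<longrightarrow> z \<in> rel_ann S le a u"
    "\<forall>x\<in>rel_ann S le a u. \<forall>y\<in>rel_ann S le a u. ljoin S le x y \<in> rel_ann S le a u"
proof -
  show "rel_ann S le a u \<subseteq> S" unfolding rel_ann_def by blast
  show "\<forall>z\<in>S. (\<forall>x\<in>S. le z x) \<longrightarrow> z \<in> rel_ann S le a u"
  proof (intro ballI impI)
    fix z assume z: "z \<in> S" "\<forall>x\<in>S. le z x"
    have "le (lmeet S le a z) z" by (rule meet_le2[OF aS z(1)])
    moreover have "le z u" using z uS by blast
    ultimately have "le (lmeet S le a z) u" by (rule trans[OF meet_in[OF aS z(1)] z(1) uS])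
    then show "z \<in> rel_ann S le a u" unfolding rel_ann_def using z(1) by blast
  qed
  show "\<forall>x\<in>rel_ann S le a u. \<forall>y\<in>rel_ann S le a u. ljoin S le x y \<in> rel_ann S le a u"
  proof (intro ballI)
    fix x y assume x: "x \<in> rel_ann S le a u" and y: "y \<in> rel_ann S le a u"
    have xS: "x \<in> S" "le (lmeet S le a x) u" using x unfolding rel_ann_def by auto
    have yS: "y \<in> S" "le (lmeet S le a y) u" using y unfolding rel_ann_def by auto
    have "lmeet S le a (ljoin S le x y) = ljoin S le (lmeet S le a x) (lmeet S le a y)"
      by (rule distrib[OF aS xS(1) yS(1)])
    moreover have "le (ljoin S le (lmeet S le a x) (lmeet S le a y)) u"
      by (rule join_least[OF meet_in[OF aS xS(1)] meet_in[OF aS yS(1)] uS xS(2) yS(2)])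
    ultimately have "le (lmeet S le a (ljoin S le x y)) u" by simp
    then show "ljoin S le x y \<in> rel_ann S le a u" unfolding rel_ann_def using join_in[OF xS(1) yS(1)] by blast
  qed
qed

lemma kJD_natLeq: "kJD natLeq S le"
  unfolding kJD_def
proof (intro allI impI, elim conjE)
  fix X j assume XS: "X \<subseteq> S" and card: "(card_of X, natLeq) \<in> ordLess" and lub: "is_lub S le X j"
  have fin: "finite X" using card finite_iff_ordLess_natLeq by blast
  have jS: "j \<in> S" using lub unfolding is_lub_def by blast
  have "\<forall>a\<in>S. is_lub S le ((\<lambda>s. lmeet S le a s) ` X) (lmeet S le a j)"
  proof
    fix a assume aS: "a \<in> S"
    show "is_lub S le ((\<lambda>s. lmeet S le a s) ` X) (lmeet S le a j)"
      unfolding is_lub_def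
    proof (intro conjI ballI impI)
      show "lmeet S le a j \<in> S" by (rule meet_in[OF aS jS])
    next
      fix t assume "t \<in> (\<lambda>s. lmeet S le a s) ` X"
      then obtain x where x: "t = lmeet S le a x" "x \<in> X" by (rule imageE)
      have xS: "x \<in> S" using x(2) XS by (rule subsetD[rotated])
      have "le x j" using lub x(2) unfolding is_lub_def by blast
      then show "le t (lmeet S le a j)" unfolding x(1) by (rule meet_mono[OF aS xS jS])
    next
      fix u assume u: "u \<in> S" "\<forall>t\<in>(\<lambda>s. lmeet S le a s) ` X. le t u"
      note cl = rel_ann_closed[OF aS u(1)]
      have XR: "X \<subseteq> rel_ann S le a u"
      proof
        fix x assume x: "x \<in> X"
        then have "lmeet S le a x \<in> (\<lambda>s. lmeet S le a s) ` X" by (rule imageI)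
        then have "le (lmeet S le a x) u" by (rule bspec[OF u(2)])
        moreover have "x \<in> S" using x XS by (rule subsetD[rotated])
        ultimately show "x \<in> rel_ann S le a u" unfolding rel_ann_def by blast
      qed
      obtain j' where j': "is_lub S le X j'" "j' \<in> rel_ann S le a u"
        using fin_lub_in[OF fin XR cl] by blast
      have "j' = j" using is_lub_unique[OF antisym' j'(1) lub] .
      then show "le (lmeet S le a j) u" using j'(2) unfolding rel_ann_def by blast
    qed
  qed
  then show "dist_join S le X j" unfolding dist_join_def using XS lub by blast
qed

lemma finite_proH:
  assumes fin: "finite S" shows "proH S le"
  unfolding proH_def
proof (intro ballI)
  fix a b assume aS: "a \<in> S" and bS: "b \<in> S"
  note cl = rel_ann_closed[OF aS bS]
  define R where "R = rel_ann S le a b"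
  have finR: "finite R" unfolding R_def using finite_subset[OF cl(1) fin] .
  obtain c where c: "is_lub S le R c" "c \<in> R"
    using fin_lub_in[OF finR _ cl[folded R_def]] by blast
  have cS: "c \<in> S" using c(2) cl(1) unfolding R_def by blast
  have "R = down S le c"
  proof (rule subset_antisym)
    show "R \<subseteq> down S le c"
    proof
      fix x assume x: "x \<in> R"
      then have "x \<in> S" using cl(1) unfolding R_def by blast
      moreover have "le x c" using c(1) x unfolding is_lub_def by blast
      ultimately show "x \<in> down S le c" unfolding down_def by blast
    qed
  next
    show "down S le c \<subseteq> R"
    proof
      fix y assume "y \<in> down S le c"
      then have y: "y \<in> S" "le y c" unfolding down_def by auto
      have ac: "le (lmeet S le a c) b" using c(2) unfolding R_def rel_ann_def by blast
      have "le (lmeet S le a y) (lmeet S le a c)" by (rule meet_mono[OF aS y(1) cS y(2)])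
      then have "le (lmeet S le a y) b" using trans[OF meet_in[OF aS y(1)] meet_in[OF aS cS] bS] ac by blast
      then show "y \<in> R" unfolding R_def rel_ann_def using y(1) by blast
    qed
  qed
  then show "normal_ideal S le (rel_ann S le a b)" using down_normal[OF cS] unfolding R_def by simp
qed

end

context bdl begin

lemma all_kproH_proH:
  assumes H: "\<forall>\<mu>::'a set set rel. regular_card \<mu> \<longrightarrow> kproH \<mu> S le"
  shows "proH S le"
proof (cases "finite (UNIV::'a set)")
  case True
  have "finite S" using True by (rule finite_subset[rotated]) simp
  then show ?thesis by (rule finite_proH)
next
  case False
  define \<mu> where "\<mu> = cardSuc (card_of (UNIV::'a set set))"
  have inf2: "\<not> finite (UNIV::'a set set)"
  proof
    assume "finite (UNIV::'a set set)"
    then have "finite (range (\<lambda>x::'a. {x}))" by (rule finite_subset[rotated]) simp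
    then have "finite (UNIV::'a set)" by (rule finite_imageD) (simp add: inj_on_def)
    then show False using False by simp
  qed
  have co: "Card_order (card_of (UNIV::'a set set))" by (rule card_of_Card_order)
  have reg: "regular_card \<mu>" unfolding regular_card_def \<mu>_def
  proof (intro conjI)
    show "Card_order (cardSuc (card_of (UNIV::'a set set)))" by (rule cardSuc_Card_order[OF co])
    show "\<not> finite (Field (cardSuc (card_of (UNIV::'a set set))))"
      using cardSuc_finite[OF co] inf2 by (simp add: Field_card_of)
    show "regularCard (cardSuc (card_of (UNIV::'a set set)))"
      by (rule infinite_cardSuc_regularCard) (use inf2 co in \<open>simp_all add: Field_card_of\<close>)
  qed
  have kp: "kproH \<mu> S le" using H reg by blast
  show ?thesis unfolding proH_def
  proof (intro ballI)
    fix a b assume aS: "a \<in> S" and bS: "b \<in> S"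
    define R where "R = rel_ann S le a b"
    have RD: "D_ideal S le R" unfolding R_def by (rule rel_ann_D[OF aS bS])
    define F where "F = (\<lambda>x. down S le x) ` R"
    have c1: "(card_of F, card_of R) \<in> ordLeq" unfolding F_def by (rule card_of_image)
    have c2: "(card_of R, card_of (UNIV::'a set)) \<in> ordLeq" by (rule card_of_mono1) simp
    have c3: "(card_of (UNIV::'a set), card_of (UNIV::'a set set)) \<in> ordLess"
      using card_of_Pow[of "UNIV::'a set"] by simp
    have c4: "(card_of (UNIV::'a set set), \<mu>) \<in> ordLess" unfolding \<mu>_def by (rule cardSuc_greater[OF co])
    have cF: "(card_of F, \<mu>) \<in> ordLess"
      using ordLeq_ordLess_trans[OF c1 ordLeq_ordLess_trans[OF c2 ordLess_transitive[OF c3 c4]]] .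
    have FB: "\<And>I. I \<in> F \<Longrightarrow> I \<in> BLk \<mu> S le"
    proof -
      fix I assume "I \<in> F"
      then obtain x where x: "I = down S le x" "x \<in> R" unfolding F_def by (rule imageE)
      have "x \<in> S" using x(2) D_ideal_sub[OF RD] by (rule subsetD[rotated])
      then have "normal_ideal S le I" unfolding x(1) by (rule down_normal)
      then show "I \<in> BLk \<mu> S le" by (intro BLk.base) (simp add: DM_def)
    qed
    have "BL_join S le F \<in> BLk \<mu> S le" by (rule BLk.join[OF FB cF])
    then have "BL_join S le F \<in> DM S le" using kp unfolding kproH_def by simp
    moreover have "BL_join S le F = R" unfolding F_def by (rule D_ideal_BL_join_down[OF RD])
    ultimately show "normal_ideal S le (rel_ann S le a b)" unfolding DM_def R_def by simp
  qed
qed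

end

lemma setlat_glb: "a \<in> S \<Longrightarrow> b \<in> S \<Longrightarrow> a \<inter> b \<in> S \<Longrightarrow> lmeet S (\<subseteq>) a b = a \<inter> b"
  unfolding lmeet_def
  by (rule the_equality) (auto simp: is_glb_def)

lemma setlat_lub: "a \<in> S \<Longrightarrow> b \<in> S \<Longrightarrow> a \<union> b \<in> S \<Longrightarrow> ljoin S (\<subseteq>) a b = a \<union> b"
  unfolding ljoin_def
  by (rule the_equality) (auto simp: is_lub_def)

lemma setlat_bdlat:
  assumes sub: "\<forall>x\<in>S. x \<subseteq> P" and PS: "P \<in> S" and eS: "{} \<in> S"
    and un: "\<And>x y. x \<in> S \<Longrightarrow> y \<in> S \<Longrightarrow> x \<union> y \<in> S"
    and int: "\<And>x y. x \<in> S \<Longrightarrow> y \<in> S \<Longrightarrow> x \<inter> y \<in> S"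
  shows "bdlat S (\<subseteq>)"
  unfolding bdlat_def
proof (intro conjI ballI)
  fix a b assume a: "a \<in> S" and b: "b \<in> S"
  show "\<exists>j. is_lub S (\<subseteq>) {a, b} j"
    by (rule exI[of _ "a \<union> b"]) (use a b un in \<open>auto simp: is_lub_def\<close>)
  show "\<exists>m. is_glb S (\<subseteq>) {a, b} m"
    by (rule exI[of _ "a \<inter> b"]) (use a b int in \<open>auto simp: is_glb_def\<close>)
  fix c assume c: "c \<in> S"
  have bc: "ljoin S (\<subseteq>) b c = b \<union> c" by (rule setlat_lub[OF b c un[OF b c]])
  have abc: "lmeet S (\<subseteq>) a (b \<union> c) = a \<inter> (b \<union> c)" by (rule setlat_glb[OF a un[OF b c] int[OF a un[OF b c]]])
  have ab: "lmeet S (\<subseteq>) a b = a \<inter> b" by (rule setlat_glb[OF a b int[OF a b]])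
  have ac: "lmeet S (\<subseteq>) a c = a \<inter> c" by (rule setlat_glb[OF a c int[OF a c]])
  have r: "ljoin S (\<subseteq>) (a \<inter> b) (a \<inter> c) = (a \<inter> b) \<union> (a \<inter> c)"
    by (rule setlat_lub[OF int[OF a b] int[OF a c] un[OF int[OF a b] int[OF a c]]])
  show "lmeet S (\<subseteq>) a (ljoin S (\<subseteq>) b c) = ljoin S (\<subseteq>) (lmeet S (\<subseteq>) a b) (lmeet S (\<subseteq>) a c)"
    unfolding bc abc ab ac r by blast
next
  show "\<exists>t\<in>S. \<forall>x\<in>S. x \<subseteq> t" using PS sub by blast
  show "\<exists>z\<in>S. \<forall>x\<in>S. z \<subseteq> x" using eS by blast
qed auto

lemma setlat_is_lub: "X \<subseteq> S \<Longrightarrow> \<Union>X \<in> S \<Longrightarrow> is_lub S (\<subseteq>) X (\<Union>X)"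
  unfolding is_lub_def by blast

lemma setlat_lub_eq: "X \<subseteq> S \<Longrightarrow> \<Union>X \<in> S \<Longrightarrow> is_lub S (\<subseteq>) X j \<Longrightarrow> j = \<Union>X"
  unfolding is_lub_def by blast

lemma finite_sm:
  assumes r: "regular_card \<kappa>" and f: "finite A" shows "(card_of A, \<kappa>) \<in> ordLess"
proof -
  have co: "Card_order \<kappa>" and inf: "\<not> finite (Field \<kappa>)" using r unfolding regular_card_def by auto
  have "Well_order \<kappa>" using co by (rule card_order_on_well_order_on)
  then show ?thesis
    by (intro finite_ordLess_infinite[OF card_of_Well_order]) (use f inf in \<open>simp_all add: Field_card_of\<close>)
qed

lemma sm_mono: "A \<subseteq> B \<Longrightarrow> (card_of B, \<kappa>) \<in> ordLess \<Longrightarrow> (card_of A, \<kappa>) \<in> ordLess"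
  by (rule ordLeq_ordLess_trans[OF card_of_mono1])

lemma sm_Un:
  assumes r: "regular_card \<kappa>" shows "(card_of A, \<kappa>) \<in> ordLess \<Longrightarrow> (card_of B, \<kappa>) \<in> ordLess \<Longrightarrow> (card_of (A \<union> B), \<kappa>) \<in> ordLess"
  using r unfolding regular_card_def by (intro card_of_Un_ordLess_infinite_Field) auto

lemma sm_UN:
  assumes r: "regular_card \<kappa>" and I: "(card_of I, \<kappa>) \<in> ordLess"
    and A: "\<And>i. i \<in> I \<Longrightarrow> (card_of (A i), \<kappa>) \<in> ordLess"
  shows "(card_of (\<Union>i\<in>I. A i), \<kappa>) \<in> ordLess"
  using r unfolding regular_card_def
  by (intro regularCard_UNION_bound) (use I A in \<open>auto simp: cinfinite_def\<close>)

lemma regular_card_natLeq: "regular_card natLeq"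
  unfolding regular_card_def using natLeq_Card_order regularCard_natLeq Field_natLeq by simp

definition lat2 :: "'k rel \<Rightarrow> 'p set \<Rightarrow> 'p set \<Rightarrow> 'p \<Rightarrow> 'p set set" where
  "lat2 \<kappa> K0 K1 q = {X. X \<subseteq> K0 \<union> K1 \<union> {q} \<and>
     ((q \<notin> X \<and> (card_of (X \<inter> K0), \<kappa>) \<in> ordLess) \<or> (q \<in> X \<and> (card_of (K1 - X), \<kappa>) \<in> ordLess))}"

locale ex2 =
  fixes \<kappa> :: "'k rel" and K0 K1 :: "'p set" and q :: 'p
  assumes reg: "regular_card \<kappa>" and disj: "K0 \<inter> K1 = {}" and q0: "q \<notin> K0" and q1: "q \<notin> K1"
    and big0: "(card_of K0, \<kappa>) \<notin> ordLess" and big1: "(card_of K1, \<kappa>) \<notin> ordLess"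
begin

abbreviation "A \<equiv> lat2 \<kappa> K0 K1 q"
abbreviation "P \<equiv> K0 \<union> K1 \<union> {q}"

lemma memA: "X \<in> A \<longleftrightarrow> X \<subseteq> P \<and>
     ((q \<notin> X \<and> (card_of (X \<inter> K0), \<kappa>) \<in> ordLess) \<or> (q \<in> X \<and> (card_of (K1 - X), \<kappa>) \<in> ordLess))"
  unfolding lat2_def by simp

lemma sm0: "(card_of {}, \<kappa>) \<in> ordLess" using finite_sm[OF reg, of "{}"] by simp
lemma eA: "{} \<in> A" unfolding memA using sm0 by simp
lemma PA: "P \<in> A"
proof -
  have e: "K1 - P = {}" by blast
  have "(card_of (K1 - P), \<kappa>) \<in> ordLess" unfolding e by (rule sm0)
  then show ?thesis unfolding memA by blast
qed
lemma subA: "X \<in> A \<Longrightarrow> X \<subseteq> P" unfolding memA by blast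

lemma unA: assumes x: "x \<in> A" and y: "y \<in> A" shows "x \<union> y \<in> A"
proof -
  have s: "x \<union> y \<subseteq> P" using subA[OF x] subA[OF y] by blast
  show ?thesis
  proof (cases "q \<in> x")
    case True
    then have "(card_of (K1 - x), \<kappa>) \<in> ordLess" using x unfolding memA by blast
    then have "(card_of (K1 - (x \<union> y)), \<kappa>) \<in> ordLess" by (rule sm_mono[rotated]) blast
    then show ?thesis unfolding memA using s True by blast
  next
    case False
    note qx = False
    show ?thesis
    proof (cases "q \<in> y")
      case True
      then have "(card_of (K1 - y), \<kappa>) \<in> ordLess" using y unfolding memA by blast
      then have "(card_of (K1 - (x \<union> y)), \<kappa>) \<in> ordLess" by (rule sm_mono[rotated]) blast
      then show ?thesis unfolding memA using s True by blast
    next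
      case False
      have "(card_of (x \<inter> K0), \<kappa>) \<in> ordLess" using x qx unfolding memA by blast
      moreover have "(card_of (y \<inter> K0), \<kappa>) \<in> ordLess" using y False unfolding memA by blast
      ultimately have "(card_of ((x \<inter> K0) \<union> (y \<inter> K0)), \<kappa>) \<in> ordLess" by (rule sm_Un[OF reg])
      then have "(card_of ((x \<union> y) \<inter> K0), \<kappa>) \<in> ordLess" by (simp add: Int_Un_distrib2)
      then show ?thesis unfolding memA using s False qx by blast
    qed
  qed
qed

lemma intA: assumes x: "x \<in> A" and y: "y \<in> A" shows "x \<inter> y \<in> A"
proof -
  have s: "x \<inter> y \<subseteq> P" using subA[OF x] by blast
  show ?thesis
  proof (cases "q \<in> x")
    case False
    then have "(card_of (x \<inter> K0), \<kappa>) \<in> ordLess" using x unfolding memA by blast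
    then have "(card_of ((x \<inter> y) \<inter> K0), \<kappa>) \<in> ordLess" by (rule sm_mono[rotated]) blast
    then show ?thesis unfolding memA using s False by blast
  next
    case True
    note qx = True
    show ?thesis
    proof (cases "q \<in> y")
      case False
      then have "(card_of (y \<inter> K0), \<kappa>) \<in> ordLess" using y unfolding memA by blast
      then have "(card_of ((x \<inter> y) \<inter> K0), \<kappa>) \<in> ordLess" by (rule sm_mono[rotated]) blast
      then show ?thesis unfolding memA using s False by blast
    next
      case True
      have "(card_of (K1 - x), \<kappa>) \<in> ordLess" using x qx unfolding memA by blast
      moreover have "(card_of (K1 - y), \<kappa>) \<in> ordLess" using y True unfolding memA by blast
      ultimately have "(card_of ((K1 - x) \<union> (K1 - y)), \<kappa>) \<in> ordLess" by (rule sm_Un[OF reg])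
      then have "(card_of (K1 - (x \<inter> y)), \<kappa>) \<in> ordLess" by (simp add: Diff_Int)
      then show ?thesis unfolding memA using s True qx by blast
    qed
  qed
qed

lemma bdA: "bdlat A (\<subseteq>)"
  by (rule setlat_bdlat[OF _ PA eA unA intA]) (use subA in blast)

lemma meetA: "x \<in> A \<Longrightarrow> y \<in> A \<Longrightarrow> lmeet A (\<subseteq>) x y = x \<inter> y"
  using setlat_glb intA by blast

lemma UnionA:
  assumes XA: "X \<subseteq> A" and cX: "(card_of X, \<kappa>) \<in> ordLess" shows "\<Union>X \<in> A"
proof -
  have s: "\<Union>X \<subseteq> P" using XA subA by blast
  show ?thesis
  proof (cases "\<exists>x\<in>X. q \<in> x")
    case True
    then obtain x where x: "x \<in> X" "q \<in> x" by blast
    have "x \<in> A" using x(1) XA by blast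
    then have "(card_of (K1 - x), \<kappa>) \<in> ordLess" using x(2) unfolding memA by blast
    then have "(card_of (K1 - \<Union>X), \<kappa>) \<in> ordLess" by (rule sm_mono[rotated]) (use x(1) in blast)
    moreover have "q \<in> \<Union>X" using x by blast
    ultimately show ?thesis unfolding memA using s by blast
  next
    case False
    have each: "\<And>x. x \<in> X \<Longrightarrow> (card_of (x \<inter> K0), \<kappa>) \<in> ordLess"
    proof -
      fix x assume x: "x \<in> X"
      then have "x \<in> A" "q \<notin> x" using XA False by blast+
      then show "(card_of (x \<inter> K0), \<kappa>) \<in> ordLess" unfolding memA by blast
    qed
    have "(card_of (\<Union>x\<in>X. x \<inter> K0), \<kappa>) \<in> ordLess" by (rule sm_UN[OF reg cX each])
    moreover have "(\<Union>x\<in>X. x \<inter> K0) = \<Union>X \<inter> K0" by blast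
    ultimately have "(card_of (\<Union>X \<inter> K0), \<kappa>) \<in> ordLess" by simp
    moreover have "q \<notin> \<Union>X" using False by blast
    ultimately show ?thesis unfolding memA using s by blast
  qed
qed

lemma kJD_A: "kJD \<kappa> A (\<subseteq>)"
  unfolding kJD_def
proof (intro allI impI, elim conjE)
  fix X j assume XA: "X \<subseteq> A" and cX: "(card_of X, \<kappa>) \<in> ordLess" and lub: "is_lub A (\<subseteq>) X j"
  have UA: "\<Union>X \<in> A" by (rule UnionA[OF XA cX])
  have j: "j = \<Union>X" by (rule setlat_lub_eq[OF XA UA lub])
  have "\<forall>a\<in>A. is_lub A (\<subseteq>) ((\<lambda>s. lmeet A (\<subseteq>) a s) ` X) (lmeet A (\<subseteq>) a j)"
  proof
    fix a assume aA: "a \<in> A"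
    have img: "(\<lambda>s. lmeet A (\<subseteq>) a s) ` X = (\<lambda>s. a \<inter> s) ` X"
      by (rule image_cong[OF refl]) (use aA XA meetA in blast)
    have aj: "lmeet A (\<subseteq>) a j = \<Union>((\<lambda>s. a \<inter> s) ` X)"
      using meetA[OF aA] UA unfolding j by blast
    have IA: "(\<lambda>s. a \<inter> s) ` X \<subseteq> A" using intA aA XA by blast
    have cI: "(card_of ((\<lambda>s. a \<inter> s) ` X), \<kappa>) \<in> ordLess" by (rule ordLeq_ordLess_trans[OF card_of_image cX])
    have "\<Union>((\<lambda>s. a \<inter> s) ` X) \<in> A" by (rule UnionA[OF IA cI])
    then show "is_lub A (\<subseteq>) ((\<lambda>s. lmeet A (\<subseteq>) a s) ` X) (lmeet A (\<subseteq>) a j)"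
      unfolding img aj by (rule setlat_is_lub[OF IA])
  qed
  then show "dist_join A (\<subseteq>) X j" unfolding dist_join_def using XA lub by blast
qed

end

context ex2 begin

lemma not_kproH_A: "\<not> kproH \<kappa> A (\<subseteq>)"
proof
  assume kp: "kproH \<kappa> A (\<subseteq>)"
  interpret L: bdl A "(\<subseteq>)" by unfold_locales (rule bdA)
  have K1A: "K1 \<in> A"
  proof -
    have e: "K1 \<inter> K0 = {}" using disj by blast
    have "(card_of (K1 \<inter> K0), \<kappa>) \<in> ordLess" unfolding e by (rule sm0)
    then show ?thesis unfolding memA using q1 by blast
  qed
  define a where "a = K1 \<union> {q}"
  have aA: "a \<in> A"
  proof -
    have e: "K1 - a = {}" unfolding a_def by blast
    have "(card_of (K1 - a), \<kappa>) \<in> ordLess" unfolding e by (rule sm0)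
    then show ?thesis unfolding memA a_def by blast
  qed
  define N1 where "N1 = {X \<in> A. X \<subseteq> K0}"
  define N2 where "N2 = down A (\<subseteq>) K1"
  have N1A: "N1 \<subseteq> A" unfolding N1_def by blast
  have "lbs A (\<subseteq>) (ubs A (\<subseteq>) N1) \<subseteq> N1"
  proof
    fix z assume z: "z \<in> lbs A (\<subseteq>) (ubs A (\<subseteq>) N1)"
    have zA: "z \<in> A" and zub: "\<forall>u\<in>ubs A (\<subseteq>) N1. z \<subseteq> u" using z unfolding lbs_def by auto
    have zK1: "z \<inter> K1 = {}"
    proof (rule ccontr)
      assume "z \<inter> K1 \<noteq> {}"
      then obtain y where y: "y \<in> z" "y \<in> K1" by blast
      define U where "U = P - {y}"
      have qy: "q \<noteq> y" using y(2) q1 by blast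
      have e: "K1 - U = {y}" unfolding U_def using y(2) by blast
      have "(card_of (K1 - U), \<kappa>) \<in> ordLess" unfolding e by (rule finite_sm[OF reg]) simp
      moreover have "q \<in> U" "U \<subseteq> P" unfolding U_def using qy by auto
      ultimately have UA: "U \<in> A" unfolding memA by blast
      have "\<forall>X\<in>N1. X \<subseteq> U" unfolding N1_def U_def using y(2) disj subA by blast
      then have "U \<in> ubs A (\<subseteq>) N1" unfolding ubs_def using UA by blast
      then have "z \<subseteq> U" using zub by blast
      then show False using y(1) unfolding U_def by blast
    qed
    have qz: "q \<notin> z"
    proof
      assume qz: "q \<in> z"
      then have "(card_of (K1 - z), \<kappa>) \<in> ordLess" using zA unfolding memA by blast
      moreover have "K1 - z = K1" using zK1 by blast
      ultimately show False using big1 by simp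
    qed
    have "z \<subseteq> K0" using subA[OF zA] zK1 qz by blast
    then show "z \<in> N1" unfolding N1_def using zA by blast
  qed
  then have N1n: "normal_ideal A (\<subseteq>) N1" unfolding normal_ideal_def using N1A lbs_ubs_ext[OF N1A] by blast
  have N2n: "normal_ideal A (\<subseteq>) N2" unfolding N2_def by (rule L.down_normal[OF K1A])
  define F where "F = {N1, N2}"
  have cF: "(card_of F, \<kappa>) \<in> ordLess" unfolding F_def by (rule finite_sm[OF reg]) simp
  have FB: "\<And>I. I \<in> F \<Longrightarrow> I \<in> BLk \<kappa> A (\<subseteq>)"
    unfolding F_def using N1n N2n by (auto intro: BLk.base simp: DM_def)
  define J where "J = BL_join A (\<subseteq>) F"
  have "J \<in> BLk \<kappa> A (\<subseteq>)" unfolding J_def by (rule BLk.join[OF FB cF])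
  then have Jn: "normal_ideal A (\<subseteq>) J" using kp unfolding kproH_def DM_def by simp
  have N1J: "N1 \<subseteq> J" and N2J: "N2 \<subseteq> J" unfolding J_def using BL_join_upper[of F A "(\<subseteq>)"] unfolding F_def by auto
  have "P \<in> lbs A (\<subseteq>) (ubs A (\<subseteq>) J)"
    unfolding lbs_def
  proof (intro CollectI conjI ballI)
    show "P \<in> A" by (rule PA)
    fix u assume u: "u \<in> ubs A (\<subseteq>) J"
    then have uA: "u \<in> A" and uJ: "\<forall>y\<in>J. y \<subseteq> u" unfolding ubs_def by auto
    have K0u: "K0 \<subseteq> u"
    proof
      fix k assume k: "k \<in> K0"
      have "(card_of ({k} \<inter> K0), \<kappa>) \<in> ordLess" by (rule finite_sm[OF reg]) simp
      moreover have "q \<notin> {k}" using k q0 by blast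
      moreover have "{k} \<subseteq> P" using k by blast
      ultimately have "{k} \<in> A" unfolding memA by blast
      then have "{k} \<in> N1" unfolding N1_def using k by blast
      then have "{k} \<subseteq> u" using N1J uJ by blast
      then show "k \<in> u" by blast
    qed
    have "K1 \<in> N2" unfolding N2_def down_def using K1A by blast
    then have K1u: "K1 \<subseteq> u" using N2J uJ by blast
    have "q \<in> u"
    proof (rule ccontr)
      assume "q \<notin> u"
      then have "(card_of (u \<inter> K0), \<kappa>) \<in> ordLess" using uA unfolding memA by blast
      moreover have "u \<inter> K0 = K0" using K0u by blast
      ultimately show False using big0 by simp
    qed
    then show "P \<subseteq> u" using K0u K1u by blast
  qed
  then have PJ: "P \<in> J" using Jn unfolding normal_ideal_def by blast
  have RD: "D_ideal A (\<subseteq>) (rel_ann A (\<subseteq>) a K1)" by (rule L.rel_ann_D[OF aA K1A])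
  have "\<Union>F \<subseteq> rel_ann A (\<subseteq>) a K1"
  proof
    fix x assume "x \<in> \<Union>F"
    then have x: "x \<in> A" "x \<subseteq> K0 \<or> x \<subseteq> K1" unfolding F_def N1_def N2_def down_def by auto
    have "lmeet A (\<subseteq>) a x = a \<inter> x" by (rule meetA[OF aA x(1)])
    moreover have "a \<inter> x \<subseteq> K1" using x(2) disj q0 unfolding a_def by blast
    ultimately show "x \<in> rel_ann A (\<subseteq>) a K1" unfolding rel_ann_def using x(1) by simp
  qed
  then have "J \<subseteq> rel_ann A (\<subseteq>) a K1" unfolding J_def by (rule BL_join_least[OF RD])
  then have "P \<in> rel_ann A (\<subseteq>) a K1" using PJ by blast
  then have "a \<inter> P \<subseteq> K1" unfolding rel_ann_def using meetA[OF aA PA] by simp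
  then show False unfolding a_def using q1 by blast
qed

end

definition lat1 :: "'l rel \<Rightarrow> 'p set \<Rightarrow> 'p \<Rightarrow> 'p set set" where
  "lat1 lam K q = {X. X \<subseteq> K \<union> {q} \<and> (card_of (X \<inter> K), lam) \<in> ordLess} \<union> {K \<union> {q}}"

locale ex1 =
  fixes lam :: "'l rel" and \<kappa> :: "'k rel" and K :: "'p set" and q :: 'p
  assumes regl: "regular_card lam" and qK: "q \<notin> K" and bigK: "(card_of K, lam) \<notin> ordLess"
    and cK: "(card_of K, \<kappa>) \<in> ordLess"
begin

abbreviation "B \<equiv> lat1 lam K q"
abbreviation "P \<equiv> K \<union> {q}"

lemma memB: "X \<in> B \<longleftrightarrow> X \<subseteq> P \<and> ((card_of (X \<inter> K), lam) \<in> ordLess \<or> X = P)"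
  unfolding lat1_def by auto

lemma sm0: "(card_of {}, lam) \<in> ordLess" using finite_sm[OF regl, of "{}"] by simp
lemma eB: "{} \<in> B" unfolding memB using sm0 by simp
lemma PB: "P \<in> B" unfolding memB by simp
lemma subB: "X \<in> B \<Longrightarrow> X \<subseteq> P" unfolding memB by blast

lemma unB: assumes x: "x \<in> B" and y: "y \<in> B" shows "x \<union> y \<in> B"
proof (cases "x = P \<or> y = P")
  case True
  then have "x \<union> y = P" using subB[OF x] subB[OF y] by blast
  then show ?thesis using PB by simp
next
  case False
  then have "(card_of (x \<inter> K), lam) \<in> ordLess" "(card_of (y \<inter> K), lam) \<in> ordLess"
    using x y unfolding memB by blast+
  then have "(card_of ((x \<inter> K) \<union> (y \<inter> K)), lam) \<in> ordLess" by (rule sm_Un[OF regl])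
  then have "(card_of ((x \<union> y) \<inter> K), lam) \<in> ordLess" by (simp add: Int_Un_distrib2)
  then show ?thesis unfolding memB using subB[OF x] subB[OF y] by blast
qed

lemma intB: assumes x: "x \<in> B" and y: "y \<in> B" shows "x \<inter> y \<in> B"
proof (cases "x = P")
  case True
  then have "x \<inter> y = y" using subB[OF y] by blast
  then show ?thesis using y by simp
next
  case False
  then have "(card_of (x \<inter> K), lam) \<in> ordLess" using x unfolding memB by blast
  then have "(card_of ((x \<inter> y) \<inter> K), lam) \<in> ordLess" by (rule sm_mono[rotated]) blast
  then show ?thesis unfolding memB using subB[OF x] by blast
qed

lemma bdB: "bdlat B (\<subseteq>)"
  by (rule setlat_bdlat[OF _ PB eB unB intB]) (use subB in blast)

lemma meetB: "x \<in> B \<Longrightarrow> y \<in> B \<Longrightarrow> lmeet B (\<subseteq>) x y = x \<inter> y"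
  using setlat_glb intB by blast

lemma singB: "k \<in> K \<Longrightarrow> {k} \<in> B"
proof -
  assume k: "k \<in> K"
  have "(card_of ({k} \<inter> K), lam) \<in> ordLess" by (rule finite_sm[OF regl]) simp
  then show "{k} \<in> B" unfolding memB using k by blast
qed

lemma kproH_B: "kproH lam B (\<subseteq>)"
proof -
  interpret L: bdl B "(\<subseteq>)" by unfold_locales (rule bdB)
  have "I \<in> BLk lam B (\<subseteq>) \<Longrightarrow> normal_ideal B (\<subseteq>) I" for I
  proof (induction rule: BLk.induct)
    case (base N) then show ?case unfolding DM_def by blast
  next
    case top then show ?case by (rule normal_top)
  next
    case (meet I J) then show ?case using normal_Int by blast
  next
    case (join F)
    have FB: "\<Union>F \<subseteq> B" using join.IH unfolding normal_ideal_def by blast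
    have JD: "D_ideal B (\<subseteq>) (BL_join B (\<subseteq>) F)" by (rule BL_join_D[OF FB])
    define u where "u = \<Union>(\<Union>F)"
    show ?case
    proof (cases "(card_of (u \<inter> K), lam) \<in> ordLess")
      case True
      have "u \<subseteq> P" unfolding u_def using FB subB by blast
      then have uB: "u \<in> B" unfolding memB using True by blast
      have "BL_join B (\<subseteq>) F = down B (\<subseteq>) u"
      proof (rule subset_antisym)
        have "D_ideal B (\<subseteq>) (down B (\<subseteq>) u)" by (rule L.normal_D[OF L.down_normal[OF uB]])
        moreover have "\<Union>F \<subseteq> down B (\<subseteq>) u" unfolding down_def u_def using FB by blast
        ultimately show "BL_join B (\<subseteq>) F \<subseteq> down B (\<subseteq>) u" by (rule BL_join_least)
      next
        have dj: "dist_join B (\<subseteq>) (\<Union>F) u"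
          unfolding dist_join_def
        proof (intro conjI ballI)
          show "\<Union>F \<subseteq> B" by fact
          show "is_lub B (\<subseteq>) (\<Union>F) u" unfolding u_def by (rule setlat_is_lub[OF FB uB[unfolded u_def]])
          fix a assume aB: "a \<in> B"
          have img: "(\<lambda>s. lmeet B (\<subseteq>) a s) ` \<Union>F = (\<lambda>s. a \<inter> s) ` \<Union>F"
            by (rule image_cong[OF refl]) (use aB FB meetB in blast)
          have au: "lmeet B (\<subseteq>) a u = \<Union>((\<lambda>s. a \<inter> s) ` \<Union>F)"
            using meetB[OF aB uB] unfolding u_def by blast
          have IB: "(\<lambda>s. a \<inter> s) ` \<Union>F \<subseteq> B" using intB aB FB by blast
          have "lmeet B (\<subseteq>) a u \<in> B" by (rule L.meet_in[OF aB uB])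
          then have "\<Union>((\<lambda>s. a \<inter> s) ` \<Union>F) \<in> B" using au by simp
          then show "is_lub B (\<subseteq>) ((\<lambda>s. lmeet B (\<subseteq>) a s) ` \<Union>F) (lmeet B (\<subseteq>) a u)"
            unfolding img au by (rule setlat_is_lub[OF IB])
        qed
        have "u \<in> BL_join B (\<subseteq>) F" by (rule D_ideal_join[OF JD BL_join_upper dj])
        then show "down B (\<subseteq>) u \<subseteq> BL_join B (\<subseteq>) F"
          unfolding down_def using D_ideal_down[OF JD] by blast
      qed
      then show ?thesis using L.down_normal[OF uB] by simp
    next
      case False
      have "\<exists>N\<in>F. (card_of (\<Union>N \<inter> K), lam) \<notin> ordLess"
      proof (rule ccontr)
        assume "\<not> (\<exists>N\<in>F. (card_of (\<Union>N \<inter> K), lam) \<notin> ordLess)"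
        then have "\<And>N. N \<in> F \<Longrightarrow> (card_of (\<Union>N \<inter> K), lam) \<in> ordLess" by blast
        then have "(card_of (\<Union>N\<in>F. \<Union>N \<inter> K), lam) \<in> ordLess" by (rule sm_UN[OF regl join.hyps(2)])
        moreover have "(\<Union>N\<in>F. \<Union>N \<inter> K) = u \<inter> K" unfolding u_def by blast
        ultimately show False using False by simp
      qed
      then obtain N where N: "N \<in> F" "(card_of (\<Union>N \<inter> K), lam) \<notin> ordLess" by blast
      have Nn: "normal_ideal B (\<subseteq>) N" using join.IH N(1) by blast
      have "B \<subseteq> lbs B (\<subseteq>) (ubs B (\<subseteq>) N)"
      proof
        fix y assume yB: "y \<in> B"
        show "y \<in> lbs B (\<subseteq>) (ubs B (\<subseteq>) N)" unfolding lbs_def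
        proof (intro CollectI conjI ballI)
          show "y \<in> B" by fact
          fix v assume "v \<in> ubs B (\<subseteq>) N"
          then have vB: "v \<in> B" and vN: "\<Union>N \<subseteq> v" unfolding ubs_def by auto
          have "(card_of (v \<inter> K), lam) \<notin> ordLess"
          proof
            assume "(card_of (v \<inter> K), lam) \<in> ordLess"
            then have "(card_of (\<Union>N \<inter> K), lam) \<in> ordLess" by (rule sm_mono[rotated]) (use vN in blast)
            then show False using N(2) by simp
          qed
          then have "v = P" using vB unfolding memB by blast
          then show "y \<subseteq> v" using subB[OF yB] by simp
        qed
      qed
      then have "N = B" using Nn unfolding normal_ideal_def by blast
      then have "B \<subseteq> BL_join B (\<subseteq>) F" using N(1) BL_join_upper[of F B "(\<subseteq>)"] by blast
      moreover have "BL_join B (\<subseteq>) F \<subseteq> B" by (rule D_ideal_sub[OF JD])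
      ultimately have "BL_join B (\<subseteq>) F = B" by (rule subset_antisym[rotated])
      then show ?thesis using normal_top by simp
    qed
  qed
  then have "BLk lam B (\<subseteq>) \<subseteq> DM B (\<subseteq>)" unfolding DM_def by blast
  then show ?thesis unfolding kproH_def using DM_BLk by blast
qed

lemma not_kproH_B: "\<not> kproH \<kappa> B (\<subseteq>)"
proof
  assume kp: "kproH \<kappa> B (\<subseteq>)"
  interpret L: bdl B "(\<subseteq>)" by unfold_locales (rule bdB)
  define F where "F = (\<lambda>k. down B (\<subseteq>) {k}) ` K"
  have cF: "(card_of F, \<kappa>) \<in> ordLess" unfolding F_def by (rule ordLeq_ordLess_trans[OF card_of_image cK])
  have FB: "\<And>I. I \<in> F \<Longrightarrow> I \<in> BLk \<kappa> B (\<subseteq>)"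
  proof -
    fix I assume "I \<in> F"
    then obtain k where k: "I = down B (\<subseteq>) {k}" "k \<in> K" unfolding F_def by (rule imageE)
    have "normal_ideal B (\<subseteq>) I" unfolding k(1) by (rule L.down_normal[OF singB[OF k(2)]])
    then show "I \<in> BLk \<kappa> B (\<subseteq>)" by (intro BLk.base) (simp add: DM_def)
  qed
  define J where "J = BL_join B (\<subseteq>) F"
  have "J \<in> BLk \<kappa> B (\<subseteq>)" unfolding J_def by (rule BLk.join[OF FB cF])
  then have Jn: "normal_ideal B (\<subseteq>) J" using kp unfolding kproH_def DM_def by simp
  have FJ: "\<Union>F \<subseteq> J" unfolding J_def by (rule BL_join_upper)
  have "P \<in> lbs B (\<subseteq>) (ubs B (\<subseteq>) J)"
    unfolding lbs_def
  proof (intro CollectI conjI ballI)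
    show "P \<in> B" by (rule PB)
    fix u assume u: "u \<in> ubs B (\<subseteq>) J"
    then have uB: "u \<in> B" and uJ: "\<forall>y\<in>J. y \<subseteq> u" unfolding ubs_def by auto
    have Ku: "K \<subseteq> u"
    proof
      fix k assume k: "k \<in> K"
      have "{k} \<in> down B (\<subseteq>) {k}" unfolding down_def using singB[OF k] by blast
      moreover have "down B (\<subseteq>) {k} \<in> F" unfolding F_def using k by (rule imageI)
      ultimately have "{k} \<in> J" using FJ by blast
      then show "k \<in> u" using uJ by blast
    qed
    have "(card_of (u \<inter> K), lam) \<notin> ordLess"
    proof
      assume "(card_of (u \<inter> K), lam) \<in> ordLess"
      moreover have "u \<inter> K = K" using Ku by blast
      ultimately show False using bigK by simp
    qed
    then have "u = P" using uB unfolding memB by blast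
    then show "P \<subseteq> u" by simp
  qed
  then have PJ: "P \<in> J" using Jn unfolding normal_ideal_def by blast
  have qB: "{q} \<in> B"
  proof -
    have e: "{q} \<inter> K = {}" using qK by blast
    have "(card_of ({q} \<inter> K), lam) \<in> ordLess" unfolding e by (rule sm0)
    then show ?thesis unfolding memB by blast
  qed
  have RD: "D_ideal B (\<subseteq>) (rel_ann B (\<subseteq>) {q} {})" by (rule L.rel_ann_D[OF qB eB])
  have "\<Union>F \<subseteq> rel_ann B (\<subseteq>) {q} {}"
  proof
    fix x assume "x \<in> \<Union>F"
    then obtain k where x: "x \<in> B" "x \<subseteq> {k}" "k \<in> K" unfolding F_def down_def by blast
    have "lmeet B (\<subseteq>) {q} x = {q} \<inter> x" by (rule meetB[OF qB x(1)])
    moreover have "{q} \<inter> x = {}" using x(2,3) qK by blast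
    ultimately show "x \<in> rel_ann B (\<subseteq>) {q} {}" unfolding rel_ann_def using x(1) by simp
  qed
  then have "J \<subseteq> rel_ann B (\<subseteq>) {q} {}" unfolding J_def by (rule BL_join_least[OF RD])
  then have "P \<in> rel_ann B (\<subseteq>) {q} {}" using PJ by blast
  then have "{q} \<inter> P \<subseteq> {}" unfolding rel_ann_def using meetB[OF qB PB] by simp
  then show False by blast
qed

end

lemma big_img:
  assumes inj: "inj_on f (Field \<kappa>)" and co: "Card_order \<kappa>"
  shows "(card_of (f ` Field \<kappa>), \<kappa>) \<notin> ordLess"
proof
  assume l: "(card_of (f ` Field \<kappa>), \<kappa>) \<in> ordLess"
  have "bij_betw f (Field \<kappa>) (f ` Field \<kappa>)" using inj by (rule inj_on_imp_bij_betw)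
  then have i1: "(card_of (Field \<kappa>), card_of (f ` Field \<kappa>)) \<in> ordIso" using card_of_ordIso by blast
  have i2: "(\<kappa>, card_of (Field \<kappa>)) \<in> ordIso" using ordIso_symmetric[OF card_of_Field_ordIso[OF co]] .
  have "(\<kappa>, \<kappa>) \<in> ordLess" using ordIso_ordLess_trans[OF ordIso_transitive[OF i2 i1] l] .
  then show False using ordLess_irreflexive by blast
qed

lemma E2_exists:
  fixes \<kappa> :: "'k rel"
  assumes reg: "regular_card \<kappa>"
  shows "\<exists>(S::'k set set set) le. bdlat S le \<and> kJD \<kappa> S le \<and> \<not> kproH \<kappa> S le"
proof -
  have co: "Card_order \<kappa>" and inf: "\<not> finite (Field \<kappa>)" using reg unfolding regular_card_def by auto
  define K0 where "K0 = (\<lambda>k. {k}) ` Field \<kappa>"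
  define K1 where "K1 = (\<lambda>k. Field \<kappa> - {k}) ` Field \<kappa>"
  have disj: "K0 \<inter> K1 = {}"
  proof (rule ccontr)
    assume "K0 \<inter> K1 \<noteq> {}"
    then obtain a b where "{a} = Field \<kappa> - {b}" unfolding K0_def K1_def by blast
    then have "Field \<kappa> \<subseteq> {a, b}" by blast
    then show False using inf finite_subset by blast
  qed
  have q0: "{} \<notin> K0" unfolding K0_def by blast
  have q1: "{} \<notin> K1"
  proof
    assume "{} \<in> K1"
    then obtain b where "Field \<kappa> - {b} = {}" unfolding K1_def by blast
    then have "Field \<kappa> \<subseteq> {b}" by blast
    then show False using inf finite_subset by blast
  qed
  have big0: "(card_of K0, \<kappa>) \<notin> ordLess" unfolding K0_def by (rule big_img[OF _ co]) (simp add: inj_on_def)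
  have big1: "(card_of K1, \<kappa>) \<notin> ordLess" unfolding K1_def
    by (rule big_img[OF _ co]) (auto simp: inj_on_def)
  interpret ex2 \<kappa> K0 K1 "{}" by unfold_locales (use reg disj q0 q1 big0 big1 in auto)
  show ?thesis using bdA kJD_A not_kproH_A by blast
qed

lemma E1_exists:
  fixes \<kappa> :: "'k rel" and lam :: "'l rel"
  assumes regl: "regular_card lam" and reg: "regular_card \<kappa>" and lk: "(lam, \<kappa>) \<in> ordLess"
  shows "\<exists>(S::'k set set set) le. bdlat S le \<and> kproH lam S le \<and> \<not> kproH \<kappa> S le"
proof -
  have co: "Card_order \<kappa>" using reg unfolding regular_card_def by auto
  have col: "Card_order lam" using regl unfolding regular_card_def by auto
  have fl: "(card_of (Field lam), lam) \<in> ordIso" by (rule card_of_Field_ordIso[OF col])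
  have "(card_of (Field lam), \<kappa>) \<in> ordLeq" using ordIso_ordLeq_trans[OF fl ordLess_imp_ordLeq[OF lk]] .
  then obtain B0 where B0: "B0 \<subseteq> Field \<kappa>" "(card_of (Field lam), card_of B0) \<in> ordIso"
    using internalize_card_of_ordLeq by blast
  define K where "K = (\<lambda>k. {k}) ` B0"
  have "bij_betw (\<lambda>k. {k}) B0 K" unfolding K_def by (rule inj_on_imp_bij_betw) (simp add: inj_on_def)
  then have "(card_of B0, card_of K) \<in> ordIso" using card_of_ordIso by blast
  then have KL: "(card_of K, lam) \<in> ordIso"
    using ordIso_transitive[OF ordIso_symmetric[OF ordIso_transitive[OF B0(2)]] fl] by blast
  have bigK: "(card_of K, lam) \<notin> ordLess"
  proof
    assume "(card_of K, lam) \<in> ordLess"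
    then have "(lam, lam) \<in> ordLess" using ordIso_ordLess_trans[OF ordIso_symmetric[OF KL]] by blast
    then show False using ordLess_irreflexive by blast
  qed
  have cK: "(card_of K, \<kappa>) \<in> ordLess" using ordIso_ordLess_trans[OF KL lk] .
  have qK: "{} \<notin> K" unfolding K_def by blast
  interpret ex1 lam \<kappa> K "{}" by unfold_locales (use regl qK bigK cK in auto)
  show ?thesis using bdB kproH_B not_kproH_B by blast
qed

theorem theorem4p8:
  fixes \<kappa> :: "'k rel" and lam :: "'l rel"
  shows
  "(regular_card lam \<and> regular_card \<kappa> \<and> (lam, \<kappa>) \<in> ordLeq \<longrightarrow>
      (\<forall>(S::'a set) le. bdlat S le \<and> kproH \<kappa> S le \<longrightarrow> kproH lam S le)) \<and>
   (regular_card lam \<and> regular_card \<kappa> \<and> (lam, \<kappa>) \<in> ordLess \<longrightarrow>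
      (\<exists>(S::'k set set set) le. bdlat S le \<and> kproH lam S le \<and> \<not> kproH \<kappa> S le)) \<and>
   (\<forall>(S::'a set) le. bdlat S le \<and> proH S le \<and> regular_card \<kappa> \<longrightarrow> kproH \<kappa> S le) \<and>
   (\<forall>(S::'a set) le. bdlat S le \<longrightarrow>
      (proH S le \<longleftrightarrow> (\<forall>\<mu>::'a set set rel. regular_card \<mu> \<longrightarrow> kproH \<mu> S le))) \<and>
   (regular_card \<kappa> \<longrightarrow>
      (\<forall>(S::'a set) le. bdlat S le \<and> kproH \<kappa> S le \<longrightarrow> kJD \<kappa> S le) \<and>
      (\<exists>(S::'k set set set) le. bdlat S le \<and> kJD \<kappa> S le \<and> \<not> kproH \<kappa> S le)) \<and>
   (\<forall>(S::'a set) le. bdlat S le \<longrightarrow> kJD natLeq S le) \<and>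
   (\<forall>(S::'a set) le. bdlat S le \<and> kproH natLeq S le \<longrightarrow> kJD natLeq S le) \<and>
   (\<exists>(S::nat set set set) le. bdlat S le \<and> kJD natLeq S le \<and> \<not> kproH natLeq S le)"
proof (intro conjI)
  show "regular_card lam \<and> regular_card \<kappa> \<and> (lam, \<kappa>) \<in> ordLeq \<longrightarrow>
      (\<forall>(S::'a set) le. bdlat S le \<and> kproH \<kappa> S le \<longrightarrow> kproH lam S le)"
    using kproH_mono by blast
next
  show "regular_card lam \<and> regular_card \<kappa> \<and> (lam, \<kappa>) \<in> ordLess \<longrightarrow>
      (\<exists>(S::'k set set set) le. bdlat S le \<and> kproH lam S le \<and> \<not> kproH \<kappa> S le)"
    using E1_exists by blast
next
  show "\<forall>(S::'a set) le. bdlat S le \<and> proH S le \<and> regular_card \<kappa> \<longrightarrow> kproH \<kappa> S le"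
  proof (intro allI impI)
    fix S :: "'a set" and le
    assume a: "bdlat S le \<and> proH S le \<and> regular_card \<kappa>"
    then interpret bdl S le by unfold_locales blast
    show "kproH \<kappa> S le" using proH_kproH a by blast
  qed
next
  show "\<forall>(S::'a set) le. bdlat S le \<longrightarrow>
      (proH S le \<longleftrightarrow> (\<forall>\<mu>::'a set set rel. regular_card \<mu> \<longrightarrow> kproH \<mu> S le))"
  proof (intro allI impI)
    fix S :: "'a set" and le
    assume a: "bdlat S le"
    then interpret bdl S le by unfold_locales
    show "proH S le \<longleftrightarrow> (\<forall>\<mu>::'a set set rel. regular_card \<mu> \<longrightarrow> kproH \<mu> S le)"
      using proH_kproH all_kproH_proH by blast
  qed
next
  show "regular_card \<kappa> \<longrightarrow>
      (\<forall>(S::'a set) le. bdlat S le \<and> kproH \<kappa> S le \<longrightarrow> kJD \<kappa> S le) \<and>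
      (\<exists>(S::'k set set set) le. bdlat S le \<and> kJD \<kappa> S le \<and> \<not> kproH \<kappa> S le)"
  proof (intro impI conjI allI)
    fix S :: "'a set" and le
    assume a: "bdlat S le \<and> kproH \<kappa> S le"
    then interpret bdl S le by unfold_locales blast
    show "kJD \<kappa> S le" using kproH_kJD a by blast
  next
    assume "regular_card \<kappa>"
    then show "\<exists>(S::'k set set set) le. bdlat S le \<and> kJD \<kappa> S le \<and> \<not> kproH \<kappa> S le"
      by (rule E2_exists)
  qed
next
  show "\<forall>(S::'a set) le. bdlat S le \<longrightarrow> kJD natLeq S le"
  proof (intro allI impI)
    fix S :: "'a set" and le
    assume a: "bdlat S le"
    then interpret bdl S le by unfold_locales
    show "kJD natLeq S le" by (rule kJD_natLeq)
  qed
next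
  show "\<forall>(S::'a set) le. bdlat S le \<and> kproH natLeq S le \<longrightarrow> kJD natLeq S le"
  proof (intro allI impI)
    fix S :: "'a set" and le
    assume a: "bdlat S le \<and> kproH natLeq S le"
    then interpret bdl S le by unfold_locales blast
    show "kJD natLeq S le" by (rule kJD_natLeq)
  qed
next
  show "\<exists>(S::nat set set set) le. bdlat S le \<and> kJD natLeq S le \<and> \<not> kproH natLeq S le"
    by (rule E2_exists[OF regular_card_natLeq])
qed


end
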